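(* Let $M=M(S^2;\frac{q_1}{p_1},\frac{q_2}{p_2},\frac{q_3}{p_3})$ with $e(M)\neq0$. If every element of $H_1(M,\mathbb{Z})$ has order dividing $2$, or if $p_1,p_2,p_3$ are weakly coprime, then $M$ has no exceptional abelian characters, i.e. $x_M=0$.
   Context: $M(S^2;\frac{q_1}{p_1},\frac{q_2}{p_2},\frac{q_3}{p_3})$ ($(p_i,q_i)$ coprime, $p_i\ge1$) is the closed Seifert manifold obtained from $S_{0,3}\times S^1$ by gluing solid tori whose meridians are $p_ic_i+q_ih_i$; $e(M)=\sum_iq_i/p_i$; $\pi_1(M)=\langle c_1,c_2,c_3,h\mid [c_i,h]=1=c_i^{p_i}h^{q_i},\ c_1c_2c_3=1\rangle$. Integers $p_1,p_2,p_3$ are weakly coprime if one of them is coprime with each of the other two. An abelian character is the trace of a diagonal representation $\pi_1(M)\to\mathrm{SL}_2(\mathbb{C})$; it is exceptional if it is the trace of a representation $\rho$ with $\rho(h)=\pm I$ and $\rho(c_i)\neq\pm I$ for $i=1,2,3$; $x_M$ is the number of exceptional abelian characters. *)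

theory Defs
  imports "HOL-Analysis.Analysis"
begin

text \<open>Generators of pi_1(M) for M = M(S^2; q1/p1, q2/p2, q3/p3):
  pi_1(M) = < c1, c2, c3, h | [ci,h] = 1 = ci^pi h^qi, c1 c2 c3 = 1 >.\<close>
datatype gen = c1 | c2 | c3 | hgen

text \<open>Group elements are represented by words in the generators and their inverses
  (True = inverse letter).\<close>
type_synonym word = "(gen \<times> bool) list"

type_synonym mat2 = "complex^2^2"

definition mpow :: "mat2 \<Rightarrow> nat \<Rightarrow> mat2" where
  "mpow A n = ((\<lambda>B. A ** B) ^^ n) (mat 1)"

definition mpow_int :: "mat2 \<Rightarrow> int \<Rightarrow> mat2" where
  "mpow_int A k = (if 0 \<le> k then mpow A (nat k) else mpow (matrix_inv A) (nat (- k)))"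

definition tr2 :: "mat2 \<Rightarrow> complex" where
  "tr2 A = A $ 1 $ 1 + A $ 2 $ 2"

definition is_diagonal2 :: "mat2 \<Rightarrow> bool" where
  "is_diagonal2 A \<longleftrightarrow> A $ 1 $ 2 = 0 \<and> A $ 2 $ 1 = 0"

definition sgen :: "nat \<Rightarrow> gen" where
  "sgen i = (if i = 1 then c1 else if i = 2 then c2 else c3)"

definition is_rep :: "(nat \<Rightarrow> nat) \<Rightarrow> (nat \<Rightarrow> int) \<Rightarrow> (gen \<Rightarrow> mat2) \<Rightarrow> bool" where
  "is_rep p q \<rho> \<longleftrightarrow>
     (\<forall>g. det (\<rho> g) = 1) \<and>
     (\<forall>i\<in>{1,2,3}. \<rho> (sgen i) ** \<rho> hgen = \<rho> hgen ** \<rho> (sgen i)) \<and>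
     (\<forall>i\<in>{1,2,3}. mpow (\<rho> (sgen i)) (p i) ** mpow_int (\<rho> hgen) (q i) = mat 1) \<and>
     \<rho> c1 ** \<rho> c2 ** \<rho> c3 = mat 1"

definition eval_word :: "(gen \<Rightarrow> mat2) \<Rightarrow> word \<Rightarrow> mat2" where
  "eval_word \<rho> w = foldr (\<lambda>(g, inv) B. (if inv then matrix_inv (\<rho> g) else \<rho> g) ** B) w (mat 1)"

definition character :: "(gen \<Rightarrow> mat2) \<Rightarrow> word \<Rightarrow> complex" where
  "character \<rho> = (\<lambda>w. tr2 (eval_word \<rho> w))"

definition abelian_character :: "(nat \<Rightarrow> nat) \<Rightarrow> (nat \<Rightarrow> int) \<Rightarrow> (word \<Rightarrow> complex) \<Rightarrow> bool" where
  "abelian_character p q \<psi> \<longleftrightarrow>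
     (\<exists>\<rho>. is_rep p q \<rho> \<and> (\<forall>g. is_diagonal2 (\<rho> g)) \<and> \<psi> = character \<rho>)"

definition exceptional_abelian_character ::
  "(nat \<Rightarrow> nat) \<Rightarrow> (nat \<Rightarrow> int) \<Rightarrow> (word \<Rightarrow> complex) \<Rightarrow> bool" where
  "exceptional_abelian_character p q \<psi> \<longleftrightarrow>
     abelian_character p q \<psi> \<and>
     (\<exists>\<rho>. is_rep p q \<rho> \<and> \<psi> = character \<rho> \<and>
          (\<rho> hgen = mat 1 \<or> \<rho> hgen = - mat 1) \<and>
          (\<forall>i\<in>{1,2,3}. \<rho> (sgen i) \<noteq> mat 1 \<and> \<rho> (sgen i) \<noteq> - mat 1))"

definition xM :: "(nat \<Rightarrow> nat) \<Rightarrow> (nat \<Rightarrow> int) \<Rightarrow> nat" where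
  "xM p q = card {\<psi>. exceptional_abelian_character p q \<psi>}"

text \<open>H_1(M;Z) is the abelianization of pi_1(M), i.e. Z^4 (coordinates c1,c2,c3,h)
  modulo the lattice spanned by the abelianized relators
  p_i c_i + q_i h (i=1,2,3) and c1+c2+c3 (the commutator relators give 0).\<close>
definition abelianize :: "word \<Rightarrow> int \<times> int \<times> int \<times> int" where
  "abelianize w = foldr (\<lambda>(g, inv) (a1, a2, a3, b).
      let s = (if inv then -1 else 1) in
      (case g of c1 \<Rightarrow> (a1 + s, a2, a3, b) | c2 \<Rightarrow> (a1, a2 + s, a3, b)
               | c3 \<Rightarrow> (a1, a2, a3 + s, b) | hgen \<Rightarrow> (a1, a2, a3, b + s))) w (0, 0, 0, 0)"

definition relation_lattice :: "(nat \<Rightarrow> nat) \<Rightarrow> (nat \<Rightarrow> int) \<Rightarrow> (int \<times> int \<times> int \<times> int) set" where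
  "relation_lattice p q = {(x1 * int (p 1) + y, x2 * int (p 2) + y, x3 * int (p 3) + y,
                            x1 * q 1 + x2 * q 2 + x3 * q 3) | x1 x2 x3 y. True}"

definition H1_exponent_two :: "(nat \<Rightarrow> nat) \<Rightarrow> (nat \<Rightarrow> int) \<Rightarrow> bool" where
  "H1_exponent_two p q \<longleftrightarrow> (\<forall>w. abelianize (w @ w) \<in> relation_lattice p q)"

definition weakly_coprime :: "nat \<Rightarrow> nat \<Rightarrow> nat \<Rightarrow> bool" where
  "weakly_coprime a b c \<longleftrightarrow>
     (coprime a b \<and> coprime a c) \<or> (coprime b a \<and> coprime b c) \<or> (coprime c a \<and> coprime c b)"

definition euler_number :: "(nat \<Rightarrow> nat) \<Rightarrow> (nat \<Rightarrow> int) \<Rightarrow> rat" where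
  "euler_number p q = (\<Sum>i\<in>{1,2,3}. of_int (q i) / of_nat (p i))"

end

theory Submission
  imports Defs
begin

lemma mat2_eq: "(A::mat2) = B \<longleftrightarrow> A$1$1=B$1$1 \<and> A$1$2 = B$1$2 \<and> A$2$1=B$2$1 \<and> A$2$2=B$2$2"
  by (auto simp: vec_eq_iff forall_2)

lemma mult2: "((A::mat2) ** B)$i$j = A$i$1*B$1$j + A$i$2*B$2$j"
  by (simp add: matrix_matrix_mult_def sum_2)

lemma mat1_2: "(mat 1 :: mat2)$i$j = (if i=j then 1 else 0)"
  by (simp add: mat_def)

lemma neg_mat1_2: "(- mat 1 :: mat2)$i$j = (if i=j then -1 else 0)"
  by (simp add: mat_def)

lemma mpow_Suc: "mpow A (Suc n) = A ** mpow A n"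
  by (simp add: mpow_def)
lemma mpow_0: "mpow A 0 = mat 1"
  by (simp add: mpow_def)

lemma mpow_diag:
  assumes "A$1$2 = 0" "A$2$1 = 0"
  shows "mpow A n $1$1 = (A$1$1)^n \<and> mpow A n $2$2 = (A$2$2)^n \<and> mpow A n $1$2 = 0 \<and> mpow A n $2$1 = 0"
  by (induction n) (simp_all add: mpow_0 mpow_Suc mult2 mat1_2 assms)

lemma matrix_inv_eq:
  fixes A B :: mat2
  assumes "A ** B = mat 1" "B ** A = mat 1"
  shows "matrix_inv A = B"
proof -
  let ?C = "matrix_inv A"
  have C: "A ** ?C = mat 1 \<and> ?C ** A = mat 1"
    unfolding matrix_inv_def by (rule someI[of _ B]) (use assms in auto)
  have "?C = ?C ** (A ** B)" using assms by (simp add: matrix_mul_rid)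
  also have "\<dots> = (?C ** A) ** B" by (simp add: matrix_mul_assoc)
  also have "\<dots> = B" using C by (simp add: matrix_mul_lid)
  finally show ?thesis .
qed

lemma inv_diag:
  fixes A :: mat2
  assumes "A$1$2 = 0" "A$2$1 = 0" "A$1$1 * A$2$2 = 1"
  shows "matrix_inv A $1$1 = A$2$2 \<and> matrix_inv A $2$2 = A$1$1 \<and> matrix_inv A $1$2 = 0 \<and> matrix_inv A $2$1 = 0"
proof -
  define B :: mat2 where "B = (\<chi> i j. if i = j then (if i = 1 then A$2$2 else A$1$1) else 0)"
  have B: "B$1$1 = A$2$2" "B$2$2 = A$1$1" "B$1$2 = 0" "B$2$1 = 0"
    by (simp_all add: B_def)
  have "A ** B = mat 1" "B ** A = mat 1"
    using assms by (simp_all add: mat2_eq mult2 mat1_2 B mult.commute)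
  then have "matrix_inv A = B" by (rule matrix_inv_eq)
  then show ?thesis using B by simp
qed

lemma mpow_int_diag:
  fixes A :: mat2
  assumes "A$1$2 = 0" "A$2$1 = 0" "A$1$1 * A$2$2 = 1"
  shows "mpow_int A k $1$1 = (A$1$1) powi k \<and> mpow_int A k $2$2 = (A$2$2) powi k
     \<and> mpow_int A k $1$2 = 0 \<and> mpow_int A k $2$1 = 0"
proof (cases "0 \<le> k")
  case True
  then show ?thesis using mpow_diag[OF assms(1,2), of "nat k"]
    by (simp add: mpow_int_def power_int_def)
next
  case False
  have nz: "A$1$1 \<noteq> 0" "A$2$2 \<noteq> 0" using assms(3) by auto
  have i1: "inverse (A$1$1) = A$2$2" "inverse (A$2$2) = A$1$1"
    using assms(3) nz by (simp_all add: field_simps mult.commute)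
  note I = inv_diag[OF assms]
  have "matrix_inv A $1$2 = 0" "matrix_inv A $2$1 = 0" using I by auto
  from mpow_diag[OF this, of "nat (-k)"] I False i1 show ?thesis
    by (simp add: mpow_int_def power_int_def)
qed

lemma alg_core:
  fixes a b c d e S N :: complex
  assumes "a*d - b*c = 1" "a + d = 2 * e" "e * e = 1"
  shows "a*(S*((1-N)+N*e*a)) + b*(S*(N*e*c)) = e*S*((1-(N+1))+(N+1)*e*a)"
   "a*(S*(N*e*b)) + b*(S*((1-N)+N*e*d)) = e*S*((N+1)*e*b)"
   "c*(S*((1-N)+N*e*a)) + d*(S*(N*e*c)) = e*S*((N+1)*e*c)"
   "c*(S*(N*e*b)) + d*(S*((1-N)+N*e*d)) = e*S*((1-(N+1))+(N+1)*e*d)"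
  using assms by algebra+

lemma mpow_tr:
  fixes A :: mat2
  assumes "det A = 1" "tr2 A = 2 * s" "s * s = 1"
  shows "mpow A n $i$j = s^n * ((1 - of_nat n) * (if i=j then 1 else 0) + of_nat n * s * A$i$j)"
proof (induction n arbitrary: i j)
  case 0
  then show ?case by (simp add: mpow_0 mat1_2)
next
  case (Suc n)
  have d: "A$1$1 * A$2$2 - A$1$2 * A$2$1 = 1" using assms(1) by (simp add: det_2)
  have t: "A$1$1 + A$2$2 = 2 * s" using assms(2) by (simp add: tr2_def)
  note C = alg_core[OF d t assms(3), of "s^n" "of_nat n"]
  show ?case
    using exhaust_2[of i] exhaust_2[of j]
    apply (elim disjE)
    unfolding mpow_Suc mult2 Suc.IH
    using C by (simp_all add: power_Suc mult.assoc)
qed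

lemma K:
  fixes A H :: mat2 and s :: complex
  assumes "det A = 1" "tr2 A = 2 * s" "s = 1 \<or> s = -1" "p \<ge> 1"
    "H = mat 1 \<or> H = - mat 1" "mpow A p ** mpow_int H k = mat 1"
  shows "A = mat 1 \<or> A = - mat 1"
proof -
  have ss: "s * s = 1" using assms(3) by auto
  obtain g :: complex where g: "g = 1 \<or> g = -1" and Hd: "H$1$1 = g" "H$2$2 = g" "H$1$2 = 0" "H$2$1 = 0"
    using assms(5) by (auto simp: mat1_2 neg_mat1_2)
  have gg: "g * g = 1" using g by auto
  define t where "t = g powi k"
  have tnz: "t \<noteq> 0" using g by (auto simp: t_def)
  note MI = mpow_int_diag[of H k, unfolded Hd, OF refl refl gg, folded t_def]
  have M: "mpow A p $i$j * t = (if i = j then 1 else 0)" for i j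
  proof -
    have "(mpow A p ** mpow_int H k) $i$j = (mat 1 :: mat2) $i$j" using assms(6) by simp
    then show ?thesis using exhaust_2[of j] MI by (auto simp: mult2 mat1_2)
  qed
  define S where "S = s ^ p"
  define N where "N = (of_nat p :: complex)"
  have Snz: "S \<noteq> 0" using assms(3) by (auto simp: S_def)
  have Nnz: "N \<noteq> 0" using assms(4) by (simp add: N_def)
  have snz: "s \<noteq> 0" using assms(3) by auto
  note P = mpow_tr[OF assms(1,2) ss, of p, folded S_def N_def]
  have "S * (N * s * A$1$2) * t = 0" using M[of 1 2] P[of 1 2] by simp
  then have b: "A$1$2 = 0" using Snz Nnz snz tnz by simp
  have "S * (N * s * A$2$1) * t = 0" using M[of 2 1] P[of 2 1] by simp
  then have c: "A$2$1 = 0" using Snz Nnz snz tnz by simp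
  have "S * ((1 - N) + N * s * A$1$1) * t = S * ((1 - N) + N * s * A$2$2) * t"
    using M[of 1 1] M[of 2 2] P[of 1 1] P[of 2 2] by simp
  then have "A$1$1 = A$2$2" using Snz Nnz snz tnz by simp
  moreover have "A$1$1 + A$2$2 = 2 * s" using assms(2) by (simp add: tr2_def)
  ultimately have a: "A$1$1 = s" "A$2$2 = s" by auto
  show ?thesis using assms(3) a b c by (auto simp: mat2_eq mat1_2 neg_mat1_2)
qed

lemma char_single: "character \<rho> [(g, False)] = tr2 (\<rho> g)"
  by (simp add: character_def eval_word_def matrix_mul_rid)

lemma gcd_pow:
  fixes x y z :: complex
  assumes "x^(2*a) = 1" "y^(2*b) = 1" "z^(2*c) = 1" "x*y*z = 1" "coprime a b" "coprime a c" "a \<ge> 1"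
  shows "x^2 = 1"
proof -
  have "(x*y*z)^(2*b*c) = 1" using assms(4) by simp
  then have "x^(2*b*c) * (y^(2*b))^c * (z^(2*c))^b = 1"
    by (simp add: power_mult_distrib power_mult[symmetric] mult.commute mult.left_commute)
  then have xb: "x^(2*(b*c)) = 1" using assms(2,3) by (simp add: mult.assoc)
  have "coprime a (b*c)" using assms(5,6) by simp
  then have g: "gcd (2*a) (2*(b*c)) = 2" by (simp add: gcd_mult_distrib_nat[symmetric])
  obtain m n where uv: "(2*a)*m = (2*(b*c))*n + gcd (2*a) (2*(b*c))"
    using bezout_nat[of "2*a" "2*(b*c)"] assms(7) by auto
  have "x^((2*a)*m) = 1" using assms(1) by (simp add: power_mult)
  also have "(2*a)*m = (2*(b*c))*n + 2" using uv g by simp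
  also have "x^((2*(b*c))*n + 2) = (x^(2*(b*c)))^n * x^2" by (simp only: power_add power_mult)
  finally show ?thesis using xb by simp
qed

theorem proposition5p5:
  fixes p :: "nat \<Rightarrow> nat" and q :: "nat \<Rightarrow> int"
  assumes "\<forall>i\<in>{1,2,3}. p i \<ge> 1 \<and> coprime (int (p i)) (q i)"
    and "euler_number p q \<noteq> 0"
    and "H1_exponent_two p q \<or> weakly_coprime (p 1) (p 2) (p 3)"
  shows "{\<psi>. exceptional_abelian_character p q \<psi>} = {} \<and> xM p q = 0"
proof -
  have empty: "{\<psi>. exceptional_abelian_character p q \<psi>} = {}"
  proof (rule ccontr)
    assume "{\<psi>. exceptional_abelian_character p q \<psi>} \<noteq> {}"
    then obtain \<psi> where "exceptional_abelian_character p q \<psi>" by auto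
    then obtain \<rho> \<rho>' where rep: "is_rep p q \<rho>" and dg: "\<forall>g. is_diagonal2 (\<rho> g)"
      and psi: "\<psi> = character \<rho>" and rep': "is_rep p q \<rho>'" and psi': "\<psi> = character \<rho>'"
      and hh: "\<rho>' hgen = mat 1 \<or> \<rho>' hgen = - mat 1"
      and ne: "\<forall>i\<in>{1,2,3}. \<rho>' (sgen i) \<noteq> mat 1 \<and> \<rho>' (sgen i) \<noteq> - mat 1"
      unfolding exceptional_abelian_character_def abelian_character_def by blast
    have tr: "tr2 (\<rho>' g) = tr2 (\<rho> g)" for g
      using psi psi' char_single[of \<rho> g] char_single[of \<rho>' g] by simp
    define L where "L g = \<rho> g $1$1" for g
    define R where "R g = \<rho> g $2$2" for g
    have z: "\<rho> g $1$2 = 0" "\<rho> g $2$1 = 0" for g using dg by (auto simp: is_diagonal2_def)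
    have LR: "L g * R g = 1" for g
    proof -
      have "det (\<rho> g) = 1" using rep unfolding is_rep_def by blast
      then show ?thesis using z[of g] by (simp add: det_2 L_def R_def)
    qed
    have Lnz: "L g \<noteq> 0" for g using LR[of g] by auto
    have key: "\<not> (L (sgen i))^2 = 1" if i: "i \<in> {1,2,3}" for i
    proof
      assume sq: "(L (sgen i))^2 = 1"
      have "R (sgen i) = L (sgen i)" using LR[of "sgen i"] sq
        by (metis mult_cancel_left power2_eq_square Lnz)
      then have t: "tr2 (\<rho>' (sgen i)) = 2 * L (sgen i)" using tr[of "sgen i"]
        by (simp add: tr2_def L_def R_def[symmetric])
      have s: "L (sgen i) = 1 \<or> L (sgen i) = -1" using sq by (simp add: power2_eq_1_iff)
      have "\<rho>' (sgen i) = mat 1 \<or> \<rho>' (sgen i) = - mat 1"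
        apply (rule K[OF _ t s _ hh, of "p i" "q i"])
        using rep' i assms(1) unfolding is_rep_def by auto
      then show False using ne i by auto
    qed
    have prod: "L c1 * L c2 * L c3 = 1"
    proof -
      have "(\<rho> c1 ** \<rho> c2 ** \<rho> c3) $1$1 = (mat 1 :: mat2) $1$1" using rep unfolding is_rep_def by simp
      then show ?thesis by (simp add: mult2 z mat1_2 L_def)
    qed
    have rel: "L (sgen i) ^ p i * L hgen powi q i = 1" if "i \<in> {1,2,3}" for i
    proof -
      have "mpow (\<rho> (sgen i)) (p i) ** mpow_int (\<rho> hgen) (q i) = mat 1"
        using rep that unfolding is_rep_def by blast
      then have "(mpow (\<rho> (sgen i)) (p i) ** mpow_int (\<rho> hgen) (q i)) $1$1 = (mat 1 :: mat2) $1$1"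
        by simp
      then show ?thesis
        using mpow_diag[OF z, of "sgen i" "p i"] mpow_int_diag[OF z LR[unfolded L_def R_def], of hgen "q i"]
        by (simp add: mult2 mat1_2 L_def)
    qed
    have k1: "(L c1)^2 \<noteq> 1" and k2: "(L c2)^2 \<noteq> 1" and k3: "(L c3)^2 \<noteq> 1"
      using key[of 1] key[of 2] key[of 3] by (simp_all add: sgen_def)
    have r1: "L c1 ^ p 1 * L hgen powi q 1 = 1" and r2: "L c2 ^ p 2 * L hgen powi q 2 = 1"
      and r3: "L c3 ^ p 3 * L hgen powi q 3 = 1"
      using rel[of 1] rel[of 2] rel[of 3] by (simp_all add: sgen_def)
    have hnz: "L hgen \<noteq> 0" by (rule Lnz)
    from assms(3) show False
    proof
      assume "H1_exponent_two p q"
      then have "abelianize ([(c1,False)] @ [(c1,False)]) \<in> relation_lattice p q"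
        unfolding H1_exponent_two_def by blast
      then obtain x1 x2 x3 y where e: "2 = x1 * int (p 1) + y" "0 = x2 * int (p 2) + y"
        "0 = x3 * int (p 3) + y" "0 = x1 * q 1 + x2 * q 2 + x3 * q 3"
        by (auto simp: abelianize_def relation_lattice_def)
      have rr: "L hgen powi q i = L g powi (- int (p i))" if "L g ^ p i * L hgen powi q i = 1" for g i
      proof -
        have "L hgen powi q i = inverse (L g ^ p i)" using that Lnz[of g]
          by (simp add: field_simps)
        then show ?thesis by (simp add: power_int_minus)
      qed
      have ex: "q 1 * x1 + q 2 * x2 + q 3 * x3 = 0" using e(4) by (simp add: mult.commute)
      have "1 = L hgen powi (q 1 * x1 + q 2 * x2 + q 3 * x3)" unfolding ex by simp
      also have "\<dots> = (L hgen powi q 1) powi x1 * (L hgen powi q 2) powi x2 * (L hgen powi q 3) powi x3"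
        using hnz by (simp add: power_int_add power_int_mult)
      also have "\<dots> = L c1 powi (- int (p 1) * x1) * L c2 powi (- int (p 2) * x2) * L c3 powi (- int (p 3) * x3)"
        using rr[OF r1] rr[OF r2] rr[OF r3] by (simp only: power_int_mult)
      also have "- int (p 1) * x1 = y + (-2)" using e(1) by (simp add: mult.commute)
      also have "- int (p 2) * x2 = y" using e(2) by (simp add: mult.commute)
      also have "- int (p 3) * x3 = y" using e(3) by (simp add: mult.commute)
      also have "L c1 powi (y + (-2)) * L c2 powi y * L c3 powi y = (L c1 * L c2 * L c3) powi y * L c1 powi (-2)"
        using Lnz[of c1] power_int_add[of "L c1" y "-2"] by (simp add: power_int_mult_distrib)
      also have "\<dots> = inverse ((L c1)^2)" using prod by (simp add: power_int_minus)
      finally have "(L c1)^2 = 1" by (metis inverse_1 inverse_inverse_eq)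
      then show False using k1 by simp
    next
      assume wc: "weakly_coprime (p 1) (p 2) (p 3)"
      obtain sg :: complex where sg: "sg = 1 \<or> sg = -1" "L hgen + R hgen = 2 * sg"
        using hh tr[of hgen] by (auto simp: tr2_def L_def R_def mat1_2 neg_mat1_2)
      have sg2: "sg * sg = 1" using sg(1) by auto
      have "(L hgen - sg)^2 = 0" using sg2 sg(2) LR[of hgen] by algebra
      then have eta: "L hgen * L hgen = 1" using sg by auto
      have w: "(L hgen powi k)^2 = 1" for k
        by (simp add: power2_eq_square power_int_mult_distrib[symmetric] eta)
      have pw: "L g ^ (2 * n) = 1" if "L g ^ n * L hgen powi k = 1" for g n k
      proof -
        have "L g ^ (2 * n) = (L g ^ n)^2 * (L hgen powi k)^2" using w[of k] by (simp add: power_mult mult.commute)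
        also have "\<dots> = (L g ^ n * L hgen powi k)^2" by (simp add: power_mult_distrib)
        finally show ?thesis using that by simp
      qed
      have a1: "L c1 ^ (2 * p 1) = 1" and a2: "L c2 ^ (2 * p 2) = 1" and a3: "L c3 ^ (2 * p 3) = 1"
        using pw[OF r1] pw[OF r2] pw[OF r3] .
      have p1: "p 1 \<ge> 1" and p2: "p 2 \<ge> 1" and p3: "p 3 \<ge> 1" using assms(1) by auto
      have pr2: "L c2 * L c1 * L c3 = 1" and pr3: "L c3 * L c1 * L c2 = 1" using prod
        by (simp_all add: mult_ac)
      from wc show False unfolding weakly_coprime_def
        using gcd_pow[OF a1 a2 a3 prod _ _ p1] gcd_pow[OF a2 a1 a3 pr2 _ _ p2] gcd_pow[OF a3 a1 a2 pr3 _ _ p3]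
          k1 k2 k3 by blast
    qed
  qed
  then show ?thesis by (simp add: xM_def)
qed

end
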